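(* For all $P,Q\in\Gamma_n$, $$0\le M_{SG}(P\|Q)\le 2\,h(P\|Q)\qquad\text{and}\qquad 0\le \xi_{SG}(P\|Q)\le 2\,\xi_{h}(P\|Q).$$
   Context: $\Gamma_n=\{P=(p_1,\dots,p_n): p_i>0,\ \sum_i p_i=1\}$, $n\ge2$. For $f:(0,\infty)\to\mathbb{R}$, $C_f(P\|Q)=\sum_{i=1}^n q_i f(p_i/q_i)$; for differentiable $f$, $E_f(P\|Q)=\sum_{i=1}^n (p_i-q_i) f'(p_i/q_i)$ and $\xi_f=E_f-C_f$. With $f_{SG}(x)=\sqrt{(x^2+1)/2}-\sqrt x$ and $f_h(x)=\frac12(\sqrt x-1)^2$: $M_{SG}=C_{f_{SG}}=\sum_i\big(\sqrt{(p_i^2+q_i^2)/2}-\sqrt{p_iq_i}\big)$, $h=C_{f_h}=\frac12\sum_i(\sqrt{p_i}-\sqrt{q_i})^2$, $\xi_{SG}=\xi_{f_{SG}}$, $\xi_h=\xi_{f_h}$. *)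

theory Defs
  imports "HOL-Analysis.Analysis"
begin

definition Gamma :: "nat \<Rightarrow> (nat \<Rightarrow> real) set" where
  "Gamma n = {P. (\<forall>i<n. P i > 0) \<and> (\<Sum>i<n. P i) = 1}"

definition Cf :: "(real \<Rightarrow> real) \<Rightarrow> nat \<Rightarrow> (nat \<Rightarrow> real) \<Rightarrow> (nat \<Rightarrow> real) \<Rightarrow> real" where
  "Cf f n P Q = (\<Sum>i<n. Q i * f (P i / Q i))"

definition Ef :: "(real \<Rightarrow> real) \<Rightarrow> nat \<Rightarrow> (nat \<Rightarrow> real) \<Rightarrow> (nat \<Rightarrow> real) \<Rightarrow> real" where
  "Ef f n P Q = (\<Sum>i<n. (P i - Q i) * deriv f (P i / Q i))"

definition xi_f :: "(real \<Rightarrow> real) \<Rightarrow> nat \<Rightarrow> (nat \<Rightarrow> real) \<Rightarrow> (nat \<Rightarrow> real) \<Rightarrow> real" where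
  "xi_f f n P Q = Ef f n P Q - Cf f n P Q"

definition f_SG :: "real \<Rightarrow> real" where
  "f_SG x = sqrt ((x^2 + 1) / 2) - sqrt x"

definition f_h :: "real \<Rightarrow> real" where
  "f_h x = (1/2) * (sqrt x - 1)^2"

definition M_SG :: "nat \<Rightarrow> (nat \<Rightarrow> real) \<Rightarrow> (nat \<Rightarrow> real) \<Rightarrow> real" where
  "M_SG = Cf f_SG"

definition hel :: "nat \<Rightarrow> (nat \<Rightarrow> real) \<Rightarrow> (nat \<Rightarrow> real) \<Rightarrow> real" where
  "hel = Cf f_h"

definition xi_SG :: "nat \<Rightarrow> (nat \<Rightarrow> real) \<Rightarrow> (nat \<Rightarrow> real) \<Rightarrow> real" where
  "xi_SG = xi_f f_SG"

definition xi_h :: "nat \<Rightarrow> (nat \<Rightarrow> real) \<Rightarrow> (nat \<Rightarrow> real) \<Rightarrow> real" where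
  "xi_h = xi_f f_h"

end

theory Submission
  imports Defs
begin

lemma dSG: assumes "x > 0"
  shows "deriv f_SG x = x / (2 * sqrt ((x^2+1)/2)) - 1 / (2 * sqrt x)"
proof -
  have "x^2+1 > 0" using zero_le_power2[of x] by linarith
  then have pos: "(x^2+1)/2 > 0" by simp
  have "(f_SG has_real_derivative (inverse (sqrt ((x^2+1)/2)) / 2 * ((2 * x) / 2) - inverse (sqrt x) / 2)) (at x)"
    unfolding f_SG_def[abs_def]
    apply (rule derivative_eq_intros refl | use assms pos in simp)+
    done
  then have "deriv f_SG x = inverse (sqrt ((x^2+1)/2)) / 2 * ((2 * x) / 2) - inverse (sqrt x) / 2"
    by (rule DERIV_imp_deriv)
  then show ?thesis by (simp add: field_simps)
qed

lemma dh: assumes "x > 0"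
  shows "deriv f_h x = 1/2 - 1 / (2 * sqrt x)"
proof -
  have "(f_h has_real_derivative ((1/2) * (2 * (sqrt x - 1) * (inverse (sqrt x) / 2)))) (at x)"
    unfolding f_h_def[abs_def]
    apply (rule derivative_eq_intros refl | use assms in simp)+
    done
  then have "deriv f_h x = (1/2) * (2 * (sqrt x - 1) * (inverse (sqrt x) / 2))"
    by (rule DERIV_imp_deriv)
  then show ?thesis using assms by (simp add: field_simps)
qed

lemma sfacts: assumes "x > 0"
  shows "sqrt ((x^2+1)/2) \<ge> sqrt x" "sqrt ((x^2+1)/2) \<ge> (x+1)/2"
proof -
  have "(x^2+1)/2 \<ge> x" using sum_squares_ge_zero[of "x-1" 0]
    by (simp add: power2_eq_square algebra_simps)
  then show "sqrt ((x^2+1)/2) \<ge> sqrt x" by simp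
  have "((x+1)/2)^2 \<le> (x^2+1)/2"
    using sum_squares_ge_zero[of "x-1" 0] by (simp add: power2_eq_square field_simps)
  then show "sqrt ((x^2+1)/2) \<ge> (x+1)/2"
    by (rule real_le_rsqrt)
qed

lemma Mpt: assumes "x > 0"
  shows "0 \<le> f_SG x \<and> f_SG x \<le> 2 * f_h x"
proof -
  define t where "t = sqrt x"
  have t: "t > 0" "x = t^2" using assms by (auto simp: t_def)
  have id: "(t^2 - t + 1)^2 - (x^2+1)/2 = ((t-1)^2)^2/2"
    using t(2) by (simp add: power2_eq_square algebra_simps)
  have "(x^2+1)/2 \<le> (t^2 - t + 1)^2"
    using id zero_le_power2[of "(t-1)^2"] by linarith
  moreover have "t^2 - t + 1 \<ge> 0" using sum_squares_ge_zero[of "t - 1/2" 0]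
    by (simp add: power2_eq_square algebra_simps) 
  ultimately have "sqrt ((x^2+1)/2) \<le> t^2 - t + 1" by (simp add: real_sqrt_le_iff real_le_lsqrt)
  then show ?thesis using sfacts(1)[OF assms] t(1)
    by (simp add: abs_of_pos f_SG_def f_h_def t_def[symmetric] t(2) power2_eq_square algebra_simps)
qed

lemma Xpt: assumes "p > 0" "q > 0"
  shows "0 \<le> (p-q) * deriv f_SG (p/q) - q * f_SG (p/q) \<and>
    (p-q) * deriv f_SG (p/q) - q * f_SG (p/q) \<le> 2 * ((p-q) * deriv f_h (p/q) - q * f_h (p/q))"
proof -
  define x where "x = p/q"
  have x: "x > 0" using assms by (simp add: x_def)
  define t where "t = sqrt x"
  define s where "s = sqrt ((x^2+1)/2)"
  have t: "t > 0" "x = t^2" using x by (auto simp: t_def)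
  have s1: "s \<ge> t" and s2: "s \<ge> (x+1)/2" using sfacts[OF x] by (auto simp: s_def t_def)
  have s0: "s > 0" using s1 t by simp
  have ss: "s^2 = (x^2+1)/2" unfolding s_def by (simp add: add_pos_nonneg)
  have pq: "p - q = q * (x - 1)" using assms by (simp add: x_def field_simps)
  have gSG: "(x-1) * deriv f_SG x - f_SG x = (x+1)/2 * (1/t - 1/s)"
  proof -
    have "(x-1) * deriv f_SG x - f_SG x = ((x-1)*x - 2*(s * s))/(2 * s) + (2*t^2 - (x-1))/(2*t)"
      using t s0 unfolding dSG[OF x] f_SG_def s_def[symmetric] t_def[symmetric]
      by (simp add: field_simps power2_eq_square)
    also have "\<dots> = (x+1)/2 * (1/t - 1/s)"
      using ss t s0 by (simp add: field_simps power2_eq_square)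
    finally show ?thesis .
  qed
  have gh: "(x-1) * deriv f_h x - f_h x = (t-1)^2/(2*t)"
    using t unfolding dh[OF x] f_h_def t_def[symmetric]
    by (simp add: field_simps power2_eq_square)
  have A: "0 \<le> (x+1)/2 * (1/t - 1/s)"
    using s1 t x by (intro mult_nonneg_nonneg) (auto simp: field_simps)
  have key: "(x+1) * (s - t) \<le> 2 * s * (t-1)^2"
  proof -
    have st: "s - t = (t^2-1)^2 / (2*(s+t))"
      using ss t s0 by (simp add: field_simps power2_eq_square)
    have "(t^2+1)*(t+1)^2 \<le> 4 * s * (s+t)"
    proof -
      have "4 * s * t \<ge> 2*t*(t^2+1)" using s2 t by (simp add: mult_left_mono) 
      then show ?thesis using ss t(2) zero_le_power2[of "t^2-1"]
        by (simp add: power2_eq_square algebra_simps)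
    qed
    then have "(t^2+1)*(t+1)^2 * (t-1)^2 \<le> 4 * s * (s+t) * (t-1)^2"
      by (simp add: mult_right_mono)
    then have "(t^2+1)*(t^2-1)^2 / (2*(s+t)) \<le> 2 * s * (t-1)^2"
      using s0 t by (simp add: field_simps power2_eq_square)
    then show ?thesis using st t(2) by (simp add: mult.commute)
  qed
  have B: "(x+1)/2 * (1/t - 1/s) \<le> 2 * ((t-1)^2/(2*t))"
  proof -
    have "(x+1)/2 * (1/t - 1/s) = (x+1) * (s - t) / (2 * s * t)" using s0 t by (simp add: field_simps)
    also have "\<dots> \<le> 2 * s * (t-1)^2 / (2 * s * t)"
      using key s0 t by (intro divide_right_mono) auto
    also have "\<dots> = 2 * ((t-1)^2/(2*t))" using s0 by simp
    finally show ?thesis .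
  qed
  have e1: "(p-q) * deriv f_SG (p/q) - q * f_SG (p/q) = q * ((x-1) * deriv f_SG x - f_SG x)"
    by (simp add: pq x_def[symmetric] algebra_simps)
  have e2: "(p-q) * deriv f_h (p/q) - q * f_h (p/q) = q * ((x-1) * deriv f_h x - f_h x)"
    by (simp add: pq x_def[symmetric] algebra_simps)
  have C: "q * ((x+1)/2 * (1/t - 1/s)) \<le> q * (2 * ((t-1)^2/(2*t)))"
    using B assms(2) by (intro mult_left_mono) auto
  show ?thesis unfolding e1 e2 gSG gh using A C assms(2)
    by (auto intro: mult_nonneg_nonneg simp: mult.left_commute[of 2])
qed

theorem proposition5p4:
  fixes n :: nat and P Q :: "nat \<Rightarrow> real"
  assumes "n \<ge> 2" and "P \<in> Gamma n" and "Q \<in> Gamma n"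
  shows "0 \<le> M_SG n P Q \<and> M_SG n P Q \<le> 2 * hel n P Q \<and>
         0 \<le> xi_SG n P Q \<and> xi_SG n P Q \<le> 2 * xi_h n P Q"
proof -
  have P: "\<And>i. i < n \<Longrightarrow> P i > 0" and Q: "\<And>i. i < n \<Longrightarrow> Q i > 0"
    using assms by (auto simp: Gamma_def)
  have xs: "xi_SG n P Q = (\<Sum>i<n. (P i - Q i) * deriv f_SG (P i / Q i) - Q i * f_SG (P i / Q i))"
    by (simp add: xi_SG_def xi_f_def Ef_def Cf_def sum_subtractf)
  have xh: "xi_h n P Q = (\<Sum>i<n. (P i - Q i) * deriv f_h (P i / Q i) - Q i * f_h (P i / Q i))"
    by (simp add: xi_h_def xi_f_def Ef_def Cf_def sum_subtractf)
  have 1: "0 \<le> M_SG n P Q" unfolding M_SG_def Cf_def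
    using P Q Mpt by (intro sum_nonneg mult_nonneg_nonneg) (auto simp: less_imp_le)
  have 2: "M_SG n P Q \<le> 2 * hel n P Q" unfolding M_SG_def hel_def Cf_def sum_distrib_left
  proof (rule sum_mono)
    fix i assume "i \<in> {..<n}"
    then have "Q i > 0" "P i / Q i > 0" using P Q by auto
    then show "Q i * f_SG (P i / Q i) \<le> 2 * (Q i * f_h (P i / Q i))"
      using Mpt[of "P i / Q i"] by (simp add: mult.left_commute[of 2] mult_left_mono)
  qed
  have 3: "0 \<le> xi_SG n P Q" unfolding xs using P Q Xpt by (intro sum_nonneg) auto
  have 4: "xi_SG n P Q \<le> 2 * xi_h n P Q" unfolding xs xh sum_distrib_left
    using P Q Xpt by (intro sum_mono) auto
  show ?thesis using 1 2 3 4 by blast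
qed

end
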